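(* In the design described in the context, suppose the boundaries $l_{k,j}\le u_{k,j}$ ($l_{k,J_k}=u_{k,J_k}$) are chosen so that, under the global null hypothesis $H_G:\mu_0=\mu_1=\dots=\mu_K$, $$P\Big(\bigcap_{k=1}^K\bigcup_{j=1}^{J_k}\Big[\bigcap_{i=1}^{j-1}\{l_{k,i}\le Z_{k,i}\le u_{k,i}\}\cap\{Z_{k,j}<l_{k,j}\}\Big]\Big)=1-\alpha$$ (i.e. with probability $1-\alpha$ every arm's statistic path falls below its lower boundary before ever exceeding its upper boundary; empty intersections are the whole sample space). Then the family-wise error rate is controlled in the strong sense at level $\alpha$: for every configuration of means $(\mu_0,\dots,\mu_K)$, the probability of rejecting at least one true $H_{0k}$ is at most $\alpha$.
   Context: A trial compares $K$ experimental arms with one common control arm (arm $0$). Outcomes on arm $k\in\{0,\dots,K\}$ are independent $N(\mu_k,\sigma^2)$ with $\sigma^2$ known. The control is recruited over stages $1,\dots,J_0$, with an analysis at the end of each stage; $n_{0,j}$ denotes the cumulative number of control patients by the end of stage $j$ ($n_{0,0}=0$). Experimental arm $k$ is added at the end of control stage $s(k)\ge 0$ and has analyses $j=1,\dots,J_k$ (with $s(k)+J_k\le J_0$), its $j$-th analysis coinciding with the end of control stage $s(k)+j$; $n_{k,j}$ denotes the cumulative number of patients on arm $k$ by its $j$-th analysis. Only concurrent controls are used: the test statistic for arm $k$ at its $j$-th analysis is $$Z_{k,j}=\frac{n_{k,j}^{-1}\sum_{i=1}^{n_{k,j}}X_{k,i}-(n_{0,s(k)+j}-n_{0,s(k)})^{-1}\sum_{i=n_{0,s(k)}+1}^{n_{0,s(k)+j}}X_{0,i}}{\sigma\sqrt{n_{k,j}^{-1}+(n_{0,s(k)+j}-n_{0,s(k)})^{-1}}},$$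 where $X_{k,i}$ is the outcome of the $i$-th patient on arm $k$. The null hypotheses are $H_{0k}:\mu_k\le\mu_0$, $k=1,\dots,K$. At the $j$-th analysis of an arm $k$ still in the trial, if $Z_{k,j}>u_{k,j}$ then $H_{0k}$ is rejected and the whole trial stops; if $Z_{k,j}<l_{k,j}$ arm $k$ is dropped from all subsequent stages; otherwise arm $k$ (and the control) continue to the next stage. The trial also stops if all arms have been dropped. Strong control of the FWER at level $\alpha$ means that for every configuration of the means the probability of rejecting at least one true $H_{0k}$ is at most $\alpha$. *)

theory Defs
  imports "HOL-Probability.Probability"
begin

text \<open>Patient outcomes are indexed by pairs (k, i): arm k (0 = control), i-th patient (i >= 1).
  A sample point is a function x :: nat \<times> nat \<Rightarrow> real.\<close>

definition patients :: "nat \<Rightarrow> (nat \<Rightarrow> nat) \<Rightarrow> (nat \<Rightarrow> nat \<Rightarrow> nat) \<Rightarrow> (nat \<times> nat) set" where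
  "patients K J n = {(k, i). k \<le> K \<and> 1 \<le> i \<and> i \<le> n k (J k)}"

definition normal_measure :: "real \<Rightarrow> real \<Rightarrow> real measure" where
  "normal_measure m \<sigma> = density lborel (normal_density m \<sigma>)"

definition trial_space ::
  "nat \<Rightarrow> (nat \<Rightarrow> nat) \<Rightarrow> (nat \<Rightarrow> nat \<Rightarrow> nat) \<Rightarrow> real \<Rightarrow> (nat \<Rightarrow> real) \<Rightarrow> (nat \<times> nat \<Rightarrow> real) measure" where
  "trial_space K J n \<sigma> \<mu> = PiM (patients K J n) (\<lambda>ki. normal_measure (\<mu> (fst ki)) \<sigma>)"

text \<open>Test statistic Z_{k,j} with concurrent controls only.\<close>
definition Zstat ::
  "real \<Rightarrow> (nat \<Rightarrow> nat) \<Rightarrow> (nat \<Rightarrow> nat \<Rightarrow> nat) \<Rightarrow> nat \<Rightarrow> nat \<Rightarrow> (nat \<times> nat \<Rightarrow> real) \<Rightarrow> real" where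
  "Zstat \<sigma> s n k j x =
     ((\<Sum>i\<in>{1..n k j}. x (k, i)) / real (n k j)
      - (\<Sum>i\<in>{n 0 (s k) + 1..n 0 (s k + j)}. x (0, i)) / (real (n 0 (s k + j)) - real (n 0 (s k))))
     / (\<sigma> * sqrt (1 / real (n k j) + 1 / (real (n 0 (s k + j)) - real (n 0 (s k)))))"

definition crosses_upper where
  "crosses_upper \<sigma> s n l u k j x \<longleftrightarrow>
     (\<forall>i\<in>{1..<j}. l k i \<le> Zstat \<sigma> s n k i x \<and> Zstat \<sigma> s n k i x \<le> u k i)
     \<and> Zstat \<sigma> s n k j x > u k j"

definition drops_at where
  "drops_at \<sigma> s n l u k j x \<longleftrightarrow>
     (\<forall>i\<in>{1..<j}. l k i \<le> Zstat \<sigma> s n k i x \<and> Zstat \<sigma> s n k i x \<le> u k i)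
     \<and> Zstat \<sigma> s n k j x < l k j"

text \<open>The trial stops at the
  first control stage at which some arm crosses its upper boundary.\<close>
definition rejects where
  "rejects K J s \<sigma> n l u k x \<longleftrightarrow>
     (\<exists>j\<in>{1..J k}. crosses_upper \<sigma> s n l u k j x \<and>
        (\<forall>k'\<in>{1..K}. \<forall>j'\<in>{1..J k'}. s k' + j' < s k + j \<longrightarrow> \<not> crosses_upper \<sigma> s n l u k' j' x))"

end

theory Submission imports Defs begin

lemma prob_normal: "\<sigma> > 0 \<Longrightarrow> prob_space (normal_measure c \<sigma>)"
  by (simp add: normal_measure_def prob_space_normal_density)

lemma sets_normal[simp]: "sets (normal_measure c \<sigma>) = sets borel"
  by (simp add: normal_measure_def)

lemma meas_normal_tgt[simp]: "M \<rightarrow>\<^sub>M normal_measure c \<sigma> = borel_measurable M"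
  by (rule measurable_cong_sets) simp_all

lemma meas_normal_src[simp]: "normal_measure c \<sigma> \<rightarrow>\<^sub>M N = borel \<rightarrow>\<^sub>M N"
  by (rule measurable_cong_sets) simp_all

lemma space_normal[simp]: "space (normal_measure c \<sigma>) = UNIV"
  by (simp add: normal_measure_def)

lemma comp_meas: "(\<lambda>x. x ki) \<in> borel_measurable (trial_space K J n \<sigma> \<mu>)"
proof (cases "ki \<in> patients K J n")
  case True
  have "(\<lambda>x. x ki) \<in> (PiM (patients K J n) (\<lambda>ki. normal_measure (\<mu> (fst ki)) \<sigma>)) \<rightarrow>\<^sub>M normal_measure (\<mu> (fst ki)) \<sigma>"
    using True by (rule measurable_component_singleton)
  then show ?thesis unfolding trial_space_def
    by (simp only: meas_normal_tgt)
next
  case False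
  have u: "(\<lambda>x. undefined::real) \<in> borel_measurable (trial_space K J n \<sigma> \<mu>)" by simp
  have eq: "\<And>x. x \<in> space (trial_space K J n \<sigma> \<mu>) \<Longrightarrow> undefined = x ki"
    using False by (cases ki) (auto simp: trial_space_def space_PiM PiE_def extensional_def)
  show ?thesis
    by (rule measurable_cong[THEN iffD1, OF eq u])
qed

lemma Z_meas[measurable]: "(\<lambda>x. Zstat \<sigma>' s n' k j x) \<in> borel_measurable (trial_space K J n \<sigma> \<mu>)"
proof -
  let ?M = "trial_space K J n \<sigma> \<mu>"
  have s1: "(\<lambda>x. \<Sum>i\<in>A. x (a, i)) \<in> borel_measurable ?M" for A a
    by (rule borel_measurable_sum) (rule comp_meas)
  have s2: "(\<lambda>x. (\<Sum>i\<in>A. x (a, i)) / d) \<in> borel_measurable ?M" for A a d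
    by (rule borel_measurable_divide[OF s1 borel_measurable_const])
  have s3: "(\<lambda>x. ((\<Sum>i\<in>A. x (a, i)) / d - (\<Sum>i\<in>B. x (b, i)) / e) / f) \<in> borel_measurable ?M" for A a d B b e f
    by (rule borel_measurable_divide[OF borel_measurable_diff[OF s2 s2] borel_measurable_const])
  show ?thesis unfolding Zstat_def by (rule s3)
qed


lemma preim_PiE:
  "(\<lambda>y. \<lambda>i\<in>I. f i (y i)) -` Pi\<^sub>E I A \<inter> space (PiM I (\<lambda>_. M))
   = Pi\<^sub>E I (\<lambda>i. f i -` A i)" if "space M = UNIV"
  using that by (auto simp: space_PiM PiE_iff extensional_def)

lemma normal_shift:
  assumes "\<sigma> > 0"
  shows "distr (normal_measure c \<sigma>) lborel (\<lambda>x. d + x) = normal_measure (d + c) \<sigma>"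
proof -
  interpret prob_space "normal_measure c \<sigma>" by (rule prob_normal[OF assms])
  have "distributed (normal_measure c \<sigma>) lborel (\<lambda>x. x) (normal_density c \<sigma>)"
    unfolding distributed_def normal_measure_def
    by (auto simp: distr_id2)
  from normal_density_affine[OF this assms, of 1 d]
  show ?thesis using assms by (simp add: distributed_def normal_measure_def)
qed

lemma shift_meas:
  "(\<lambda>y. \<lambda>i\<in>I. (m i - c) + y i) \<in> PiM I (\<lambda>_. normal_measure c \<sigma>) \<rightarrow>\<^sub>M PiM I (\<lambda>i. normal_measure (m i) \<sigma>)"
proof (rule measurable_restrict)
  fix i assume i: "i \<in> I"
  have "(\<lambda>y. y i) \<in> PiM I (\<lambda>_. normal_measure c \<sigma>) \<rightarrow>\<^sub>M normal_measure c \<sigma>"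
    using i by (rule measurable_component_singleton)
  then have "(\<lambda>y. y i) \<in> borel_measurable (PiM I (\<lambda>_. normal_measure c \<sigma>))"
    by (simp only: meas_normal_tgt)
  then have "(\<lambda>y. (m i - c) + y i) \<in> borel_measurable (PiM I (\<lambda>_. normal_measure c \<sigma>))" by simp
  then show "(\<lambda>y. (m i - c) + y i) \<in> PiM I (\<lambda>_. normal_measure c \<sigma>) \<rightarrow>\<^sub>M normal_measure (m i) \<sigma>"
    by (simp only: meas_normal_tgt)
qed

lemma distr_shift:
  assumes fin: "finite I" and sp: "\<sigma> > 0"
  shows "distr (PiM I (\<lambda>_. normal_measure c \<sigma>)) (PiM I (\<lambda>i. normal_measure (m i) \<sigma>))
           (\<lambda>y. \<lambda>i\<in>I. (m i - c) + y i) = PiM I (\<lambda>i. normal_measure (m i) \<sigma>)"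
    (is "distr ?Q ?P ?T = ?P")
proof -
  interpret P: product_prob_space "\<lambda>i. normal_measure (m i) \<sigma>"
    by (rule product_prob_spaceI) (rule prob_normal[OF sp])
  interpret Q: product_prob_space "\<lambda>_. normal_measure c \<sigma>"
    by (rule product_prob_spaceI) (rule prob_normal[OF sp])
  have Tm: "?T \<in> ?Q \<rightarrow>\<^sub>M ?P"
  proof (rule measurable_restrict)
    fix i assume i: "i \<in> I"
    have "(\<lambda>y. y i) \<in> ?Q \<rightarrow>\<^sub>M normal_measure c \<sigma>"
      using i by (rule measurable_component_singleton)
    then have "(\<lambda>y. y i) \<in> borel_measurable ?Q"
      by (simp only: meas_normal_tgt)
    then have "(\<lambda>y. (m i - c) + y i) \<in> borel_measurable ?Q" by simp
    then show "(\<lambda>y. (m i - c) + y i) \<in> ?Q \<rightarrow>\<^sub>M normal_measure (m i) \<sigma>"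
      by (simp only: meas_normal_tgt)
  qed
  show ?thesis
  proof (rule P.PiM_eqI[OF fin])
    show "sets (distr ?Q ?P ?T) = sets ?P" by simp
    fix A assume A: "\<And>i. i \<in> I \<Longrightarrow> A i \<in> sets (normal_measure (m i) \<sigma>)"
    have PA: "Pi\<^sub>E I A \<in> sets ?P" using A by (intro sets_PiM_I_finite fin) auto
    have "emeasure (distr ?Q ?P ?T) (Pi\<^sub>E I A) = emeasure ?Q (?T -` Pi\<^sub>E I A \<inter> space ?Q)"
      by (rule emeasure_distr[OF Tm PA])
    also have "?T -` Pi\<^sub>E I A \<inter> space ?Q = Pi\<^sub>E I (\<lambda>i. (\<lambda>x. (m i - c) + x) -` A i)"
      by (rule preim_PiE) simp
    also have "emeasure ?Q (Pi\<^sub>E I (\<lambda>i. (\<lambda>x. (m i - c) + x) -` A i))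
        = (\<Prod>i\<in>I. emeasure (normal_measure c \<sigma>) ((\<lambda>x. (m i - c) + x) -` A i))"
    proof (rule Q.emeasure_PiM[OF fin])
      fix i assume i: "i \<in> I"
      have "(\<lambda>x. (m i - c) + x) -` A i \<inter> space lborel \<in> sets lborel"
        using A[OF i] by (intro measurable_sets[of _ lborel lborel]) auto
      then show "(\<lambda>x. (m i - c) + x) -` A i \<in> sets (normal_measure c \<sigma>)" by simp
    qed
    also have "\<dots> = (\<Prod>i\<in>I. emeasure (distr (normal_measure c \<sigma>) lborel (\<lambda>x. (m i - c) + x)) (A i))"
    proof (rule prod.cong[OF refl])
      fix i assume i: "i \<in> I"
      have "emeasure (distr (normal_measure c \<sigma>) lborel (\<lambda>x. (m i - c) + x)) (A i)
          = emeasure (normal_measure c \<sigma>) ((\<lambda>x. (m i - c) + x) -` A i \<inter> space (normal_measure c \<sigma>))"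
      proof (rule emeasure_distr)
        have "normal_measure c \<sigma> \<rightarrow>\<^sub>M (lborel::real measure) = borel \<rightarrow>\<^sub>M borel"
          by (rule measurable_cong_sets) simp_all
        then show "(\<lambda>x. (m i - c) + x) \<in> normal_measure c \<sigma> \<rightarrow>\<^sub>M lborel"
          by simp
        show "A i \<in> sets lborel" using A[OF i] by simp
      qed
      then show "emeasure (normal_measure c \<sigma>) ((\<lambda>x. (m i - c) + x) -` A i)
          = emeasure (distr (normal_measure c \<sigma>) lborel (\<lambda>x. (m i - c) + x)) (A i)" by simp
    qed
    also have "\<dots> = (\<Prod>i\<in>I. emeasure (normal_measure (m i) \<sigma>) (A i))"
      using normal_shift[OF sp] by simp
    finally show "emeasure (distr ?Q ?P ?T) (Pi\<^sub>E I A) = (\<Prod>i\<in>I. emeasure (normal_measure (m i) \<sigma>) (A i))" .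
  qed
qed


lemma mono_chain:
  assumes "\<And>j. a \<le> j \<Longrightarrow> Suc j \<le> N \<Longrightarrow> f j \<le> f (Suc j)" "a \<le> b" "b \<le> N"
  shows "(f a :: nat) \<le> f b"
  using assms(2,3)
proof (induction b)
  case 0 then show ?case by simp
next
  case (Suc b)
  show ?case
  proof (cases "a = Suc b")
    case True then show ?thesis by simp
  next
    case False
    then have "a \<le> b" using Suc.prems by simp
    then have "f a \<le> f b" using Suc by simp
    also have "f b \<le> f (Suc b)" using assms(1) \<open>a \<le> b\<close> Suc.prems by simp
    finally show ?thesis .
  qed
qed

lemma n0_mono:
  fixes n :: "nat \<Rightarrow> nat \<Rightarrow> nat"
  assumes "\<forall>j<J 0. n 0 j < n 0 (Suc j)" "a \<le> b" "b \<le> J 0"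
  shows "n 0 a \<le> n 0 b"
  by (rule mono_chain[where f="n 0" and N="J 0"]) (use assms in \<open>auto intro: less_imp_le\<close>)

lemma nk_bounds:
  fixes n :: "nat \<Rightarrow> nat \<Rightarrow> nat"
  assumes "\<forall>k\<in>{1..K}. 0 < n k 1" "\<forall>k\<in>{1..K}. \<forall>j\<in>{1..<J k}. n k j \<le> n k (Suc j)"
    "k \<in> {1..K}" "j \<in> {1..J k}"
  shows "0 < n k j" "n k j \<le> n k (J k)"
proof -
  have m: "\<And>i. 1 \<le> i \<Longrightarrow> Suc i \<le> J k \<Longrightarrow> n k i \<le> n k (Suc i)" using assms by auto
  have "n k 1 \<le> n k j" by (rule mono_chain[where f="n k" and N="J k"]) (use assms m in auto)
  then show "0 < n k j" using assms by force
  have "n k j \<le> n k (J k)" by (rule mono_chain[where f="n k" and N="J k"]) (use assms m in auto)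
  then show "n k j \<le> n k (J k)" .
qed

lemma finite_patients: "finite (patients K J n)"
proof -
  have "patients K J n = Sigma {..K} (\<lambda>k. {1..n k (J k)})"
    by (auto simp: patients_def)
  then show ?thesis by simp
qed

lemma drops_mono:
  assumes le: "\<forall>i\<in>{1..j}. Zstat \<sigma> s n k i x' \<le> Zstat \<sigma> s n k i x"
    and d: "drops_at \<sigma> s n l u k j x" and j: "1 \<le> j"
  shows "\<exists>j'\<in>{1..j}. drops_at \<sigma> s n l u k j' x'"
proof -
  let ?P = "\<lambda>i. 1 \<le> i \<and> Zstat \<sigma> s n k i x' < l k i"
  have Pj: "?P j" using le d j unfolding drops_at_def by force
  define j' where "j' = (LEAST i. ?P i)"
  have Pj': "?P j'" unfolding j'_def by (rule LeastI[of ?P j, OF Pj])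
  have j'j: "j' \<le> j" unfolding j'_def by (rule Least_le[of ?P j, OF Pj])
  have "drops_at \<sigma> s n l u k j' x'"
    unfolding drops_at_def
  proof (intro conjI ballI)
    fix i assume i: "i \<in> {1..<j'}"
    then have "\<not> ?P i" unfolding j'_def using not_less_Least by auto
    then show "l k i \<le> Zstat \<sigma> s n k i x'" using i by auto
    have "Zstat \<sigma> s n k i x' \<le> Zstat \<sigma> s n k i x" using le i j'j by auto
    also have "\<dots> \<le> u k i" using d i j'j unfolding drops_at_def by auto
    finally show "Zstat \<sigma> s n k i x' \<le> u k i" .
  next
    show "Zstat \<sigma> s n k j' x' < l k j'" using Pj' by simp
  qed
  then show ?thesis using Pj' j'j by auto
qed

lemma crosses_not_drops:
  assumes c: "crosses_upper \<sigma> s n l u k j x" and lu: "l k j \<le> u k j"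
    and j: "1 \<le> j" "1 \<le> j'"
  shows "\<not> drops_at \<sigma> s n l u k j' x"
proof
  assume d: "drops_at \<sigma> s n l u k j' x"
  consider "j' < j" | "j' = j" | "j < j'" by linarith
  then show False
  proof cases
    case 1
    then have "j' \<in> {1..<j}" using j by auto
    then show False using c d unfolding crosses_upper_def drops_at_def by force
  next
    case 2 then show False using c d lu unfolding crosses_upper_def drops_at_def by auto
  next
    case 3
    then have "j \<in> {1..<j'}" using j by auto
    then show False using c d unfolding crosses_upper_def drops_at_def by force
  qed
qed

lemma D_sets:
  assumes "finite A"
  shows "{x \<in> space (trial_space K J n \<sigma> \<mu>). \<forall>k\<in>A. \<exists>j\<in>{1..J k}. drops_at \<sigma>' s n' l u k j x}
     \<in> sets (trial_space K J n \<sigma> \<mu>)"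
  using assms unfolding drops_at_def by measurable


lemma Z_shift:
  fixes n :: "nat \<Rightarrow> nat \<Rightarrow> nat" and \<mu> :: "nat \<Rightarrow> real"
  assumes sigma_pos: "\<sigma> > 0"
    and n0_incr: "\<forall>j<J 0. n 0 j < n 0 (Suc j)"
    and arm_stages: "\<forall>k\<in>{1..K}. 1 \<le> J k \<and> s k + J k \<le> J 0"
    and nk_pos: "\<forall>k\<in>{1..K}. 0 < n k 1"
    and nk_mono: "\<forall>k\<in>{1..K}. \<forall>j\<in>{1..<J k}. n k j \<le> n k (Suc j)"
    and k: "k \<in> {1..K}" and j: "j \<in> {1..J k}" and mu: "\<mu> k \<le> \<mu> 0"
  shows "Zstat \<sigma> s n k j (\<lambda>i\<in>patients K J n. (\<mu> (fst i) - \<mu> 0) + y i) \<le> Zstat \<sigma> s n k j y"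
proof -
  let ?T = "\<lambda>i\<in>patients K J n. (\<mu> (fst i) - \<mu> 0) + y i"
  have N: "0 < n k j" "n k j \<le> n k (J k)" using nk_bounds[OF nk_pos nk_mono k j] by auto
  have skj: "s k + j \<le> J 0"
  proof -
    have "s k + J k \<le> J 0" using arm_stages k by blast
    then show ?thesis using j by auto
  qed
  have ab: "n 0 (s k) \<le> n 0 (s k + j)" by (rule n0_mono[of J n, OF n0_incr]) (use skj in auto)
  have bJ: "n 0 (s k + j) \<le> n 0 (J 0)" by (rule n0_mono[of J n, OF n0_incr skj order_refl])
  have kK: "k \<le> K" using k by auto
  have sk: "(\<Sum>i\<in>{1..n k j}. ?T (k, i)) = (\<Sum>i\<in>{1..n k j}. y (k, i)) + real (n k j) * (\<mu> k - \<mu> 0)"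
  proof -
    have "(\<Sum>i\<in>{1..n k j}. ?T (k, i)) = (\<Sum>i\<in>{1..n k j}. y (k, i) + (\<mu> k - \<mu> 0))"
      using N kK by (intro sum.cong) (auto simp: patients_def)
    then show ?thesis by (simp add: sum.distrib)
  qed
  have s0: "(\<Sum>i\<in>{n 0 (s k) + 1..n 0 (s k + j)}. ?T (0, i)) = (\<Sum>i\<in>{n 0 (s k) + 1..n 0 (s k + j)}. y (0, i))"
    using bJ by (intro sum.cong) (auto simp: patients_def)
  define S where "S = (\<Sum>i\<in>{1..n k j}. y (k, i))"
  define C where "C = (\<Sum>i\<in>{n 0 (s k) + 1..n 0 (s k + j)}. y (0, i)) / (real (n 0 (s k + j)) - real (n 0 (s k)))"
  define D where "D = \<sigma> * sqrt (1 / real (n k j) + 1 / (real (n 0 (s k + j)) - real (n 0 (s k))))"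
  have D: "0 \<le> D" unfolding D_def using sigma_pos ab N by (intro mult_nonneg_nonneg) auto
  have "Zstat \<sigma> s n k j ?T = ((S + real (n k j) * (\<mu> k - \<mu> 0)) / real (n k j) - C) / D"
    unfolding Zstat_def sk s0 S_def C_def D_def ..
  also have "\<dots> = (S / real (n k j) + (\<mu> k - \<mu> 0) - C) / D"
    using N by (simp add: add_divide_distrib)
  also have "\<dots> \<le> (S / real (n k j) - C) / D"
    using D mu by (intro divide_right_mono) auto
  also have "\<dots> = Zstat \<sigma> s n k j y" unfolding Zstat_def S_def C_def D_def ..
  finally show ?thesis .
qed

theorem corollary1:
  fixes K :: nat and J :: "nat \<Rightarrow> nat" and s :: "nat \<Rightarrow> nat"
    and n :: "nat \<Rightarrow> nat \<Rightarrow> nat" and l u :: "nat \<Rightarrow> nat \<Rightarrow> real"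
    and \<sigma> \<alpha> :: real
  assumes sigma_pos: "\<sigma> > 0"
    and n00: "n 0 0 = 0"
    and n0_incr: "\<forall>j<J 0. n 0 j < n 0 (Suc j)"
    and arm_stages: "\<forall>k\<in>{1..K}. 1 \<le> J k \<and> s k + J k \<le> J 0"
    and nk_pos: "\<forall>k\<in>{1..K}. 0 < n k 1"
    and nk_mono: "\<forall>k\<in>{1..K}. \<forall>j\<in>{1..<J k}. n k j \<le> n k (Suc j)"
    and l_le_u: "\<forall>k\<in>{1..K}. \<forall>j\<in>{1..J k}. l k j \<le> u k j"
    and l_eq_u_final: "\<forall>k\<in>{1..K}. l k (J k) = u k (J k)"
    and global_null: "\<forall>c::real.
       measure (trial_space K J n \<sigma> (\<lambda>_. c))
         {x \<in> space (trial_space K J n \<sigma> (\<lambda>_. c)).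
            \<forall>k\<in>{1..K}. \<exists>j\<in>{1..J k}. drops_at \<sigma> s n l u k j x} = 1 - \<alpha>"
  shows "\<forall>\<mu> :: nat \<Rightarrow> real.
       measure (trial_space K J n \<sigma> \<mu>)
         {x \<in> space (trial_space K J n \<sigma> \<mu>).
            \<exists>k\<in>{1..K}. \<mu> k \<le> \<mu> 0 \<and> rejects K J s \<sigma> n l u k x} \<le> \<alpha>"
proof
  fix \<mu> :: "nat \<Rightarrow> real"
  define I where "I = patients K J n"
  define c where "c = \<mu> 0"
  define P where "P = trial_space K J n \<sigma> \<mu>"
  define Q where "Q = trial_space K J n \<sigma> (\<lambda>_. c)"
  define A where "A = {k\<in>{1..K}. \<mu> k \<le> \<mu> 0}"
  define T where "T = (\<lambda>y. \<lambda>i\<in>I. (\<mu> (fst i) - c) + y i)"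
  define D where "D = {x \<in> space Q. \<forall>k\<in>A. \<exists>j\<in>{1..J k}. drops_at \<sigma> s n l u k j x}"
  define G where "G = {x \<in> space Q. \<forall>k\<in>{1..K}. \<exists>j\<in>{1..J k}. drops_at \<sigma> s n l u k j x}"
  define R where "R = {x \<in> space P. \<exists>k\<in>{1..K}. \<mu> k \<le> \<mu> 0 \<and> rejects K J s \<sigma> n l u k x}"
  have finI: "finite I" unfolding I_def by (rule finite_patients)
  interpret P: prob_space P unfolding P_def trial_space_def
    by (intro prob_space_PiM prob_normal[OF sigma_pos])
  interpret Q: prob_space Q unfolding Q_def trial_space_def
    by (intro prob_space_PiM prob_normal[OF sigma_pos])
  have spPQ: "space P = space Q"
    unfolding P_def Q_def trial_space_def by (simp add: space_PiM)
  have setsPQ: "sets P = sets Q"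
    unfolding P_def Q_def trial_space_def by (intro sets_PiM_cong) auto
  have finA: "finite A" unfolding A_def by auto
  have DQ: "D \<in> sets Q" unfolding D_def Q_def by (rule D_sets[OF finA])
  have DP: "D \<in> sets P" using DQ setsPQ by simp
  have GQ: "G \<subseteq> D" unfolding G_def D_def A_def by auto
  have "measure Q G = 1 - \<alpha>" using global_null unfolding G_def Q_def by blast
  then have QD: "1 - \<alpha> \<le> measure Q D"
    using Q.finite_measure_mono[OF GQ DQ] by simp
  have distrT: "distr Q P T = P"
    using distr_shift[OF finI sigma_pos, of c "\<lambda>i. \<mu> (fst i)"]
    unfolding P_def Q_def trial_space_def T_def I_def by simp
  have Tm: "T \<in> Q \<rightarrow>\<^sub>M P"
    using shift_meas[where I=I and m="\<lambda>i. \<mu> (fst i)" and c=c and \<sigma>=\<sigma>]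
    unfolding P_def Q_def trial_space_def T_def I_def by simp
  have "measure P D = measure (distr Q P T) D" using distrT by simp
  also have "\<dots> = measure Q (T -` D \<inter> space Q)"
    by (rule measure_distr[OF Tm DP])
  finally have PD: "measure P D = measure Q (T -` D \<inter> space Q)" .
  have sub: "D \<subseteq> T -` D \<inter> space Q"
  proof
    fix y assume y: "y \<in> D"
    then have yQ: "y \<in> space Q" unfolding D_def by auto
    have TyP: "T y \<in> space P" using measurable_space[OF Tm yQ] .
    have "\<forall>k\<in>A. \<exists>j\<in>{1..J k}. drops_at \<sigma> s n l u k j (T y)"
    proof
      fix k assume k: "k \<in> A"
      obtain j where j: "j \<in> {1..J k}" and dj: "drops_at \<sigma> s n l u k j y"
        using y k unfolding D_def by auto
      have kK: "k \<in> {1..K}" and mk: "\<mu> k \<le> \<mu> 0" using k unfolding A_def by auto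
      have "\<forall>i\<in>{1..j}. Zstat \<sigma> s n k i (T y) \<le> Zstat \<sigma> s n k i y"
      proof
        fix i assume i: "i \<in> {1..j}"
        then have i': "i \<in> {1..J k}" using j by auto
        show "Zstat \<sigma> s n k i (T y) \<le> Zstat \<sigma> s n k i y"
          using Z_shift[OF sigma_pos n0_incr arm_stages nk_pos nk_mono kK i' mk, of y]
          unfolding T_def I_def c_def .
      qed
      from drops_mono[OF this dj] j obtain j' where "j' \<in> {1..j}" "drops_at \<sigma> s n l u k j' (T y)"
        by auto
      then show "\<exists>j\<in>{1..J k}. drops_at \<sigma> s n l u k j (T y)" using j by (intro bexI) auto
    qed
    then show "y \<in> T -` D \<inter> space Q" using TyP yQ spPQ unfolding D_def by auto
  qed
  have pre: "T -` D \<inter> space Q \<in> sets Q" by (rule measurable_sets[OF Tm DP])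
  have QDPD: "measure Q D \<le> measure P D"
    unfolding PD by (rule Q.finite_measure_mono[OF sub pre])
  have RD: "R \<subseteq> space P - D"
  proof
    fix x assume x: "x \<in> R"
    then obtain k where k: "k \<in> {1..K}" "\<mu> k \<le> \<mu> 0" and r: "rejects K J s \<sigma> n l u k x"
      unfolding R_def by auto
    obtain j where j: "j \<in> {1..J k}" and cu: "crosses_upper \<sigma> s n l u k j x"
      using r unfolding rejects_def by auto
    have lu: "l k j \<le> u k j" using l_le_u k j by auto
    have "\<not> drops_at \<sigma> s n l u k j' x" if "j' \<in> {1..J k}" for j'
      by (rule crosses_not_drops[OF cu lu]) (use j that in auto)
    then have "x \<notin> D" using k unfolding D_def A_def by auto
    then show "x \<in> space P - D" using x unfolding R_def by auto
  qed
  have "measure P R \<le> measure P (space P - D)"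
    by (rule P.finite_measure_mono[OF RD]) (use DP in auto)
  also have "\<dots> = 1 - measure P D" by (rule P.prob_compl[OF DP])
  also have "\<dots> \<le> \<alpha>" using QD QDPD by linarith
  finally show "measure (trial_space K J n \<sigma> \<mu>)
         {x \<in> space (trial_space K J n \<sigma> \<mu>).
            \<exists>k\<in>{1..K}. \<mu> k \<le> \<mu> 0 \<and> rejects K J s \<sigma> n l u k x} \<le> \<alpha>"
    unfolding R_def P_def .
qed

end
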